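(* Let $(\mathfrak{Q},\&,e)$ be a non-trivial unital quantale and let $\alpha$ be a $\mathfrak{Q}$-preorder on a $\mathfrak{Q}$-subset $(X,|\cdot|)$. (1) If $|\cdot|'\colon X\to\mathfrak{Q}$ is another map with $|x|\le|x|'\le\alpha(x,x)$ for all $x\in X$, then $\alpha$ is also a $\mathfrak{Q}$-preorder on the $\mathfrak{Q}$-subset $(X,|\cdot|')$. (2) If $\mathfrak{Q}$ is integral, then $\alpha(x,x)=|x|$ for every $x\in X$.
   Context: A unital quantale $(\mathfrak{Q},\&,e)$ is a complete lattice with an associative multiplication $\&$ with unit $e$, preserving arbitrary joins in each variable; non-trivial means $\bot<e$; integral means $e=\top$. Implications: $p\& q\le r\iff p\le r/ q\iff q\le p\backslash r$. A $\mathfrak{Q}$-subset is a set $X$ with a map $|\cdot|\colon X\to\mathfrak{Q}$. A $\mathfrak{Q}$-preorder on $(X,|\cdot|)$ is a map $\alpha\colon X\times X\to\mathfrak{Q}$ such that for all $x,y,z\in X$: (divisibility) $(\alpha(x,y)/|x|)\&|x|=\alpha(x,y)=|y|\&(|y|\backslash\alpha(x,y))$; (reflexivity) $|x|\le\alpha(x,x)$; (transitivity) $(\alpha(y,z)/|y|)\&\alpha(x,y)=\alpha(y,z)\&(|y|\backslash\alpha(x,y))\le\alpha(x,z)$. *)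

theory Defs
  imports Main
begin

locale unital_quantale =
  fixes mult :: "'q::complete_lattice \<Rightarrow> 'q \<Rightarrow> 'q" (infixl "&&" 70)
    and e :: "'q"
  assumes mult_assoc: "(p && q) && r = p && (q && r)"
    and unit_left: "e && p = p"
    and unit_right: "p && e = p"
    and Sup_distrib_left: "p && Sup A = Sup ((\<lambda>a. p && a) ` A)"
    and Sup_distrib_right: "Sup A && p = Sup ((\<lambda>a. a && p) ` A)"
begin

definition rimp :: "'q \<Rightarrow> 'q \<Rightarrow> 'q" (infixl "'/'/" 65) where
  "r // q = Sup {p. p && q \<le> r}"

definition limp :: "'q \<Rightarrow> 'q \<Rightarrow> 'q" (infixr "\<setminus>\<setminus>" 65) where
  "p \<setminus>\<setminus> r = Sup {q. p && q \<le> r}"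

definition nontrivial :: bool where
  "nontrivial \<longleftrightarrow> bot < e"

definition integral :: bool where
  "integral \<longleftrightarrow> e = top"

definition Q_preorder :: "'a set \<Rightarrow> ('a \<Rightarrow> 'q) \<Rightarrow> ('a \<Rightarrow> 'a \<Rightarrow> 'q) \<Rightarrow> bool" where
  "Q_preorder X nm \<alpha> \<longleftrightarrow>
     (\<forall>x\<in>X. \<forall>y\<in>X. (\<alpha> x y // nm x) && nm x = \<alpha> x y
                   \<and> \<alpha> x y = nm y && (nm y \<setminus>\<setminus> \<alpha> x y))
   \<and> (\<forall>x\<in>X. nm x \<le> \<alpha> x x)
   \<and> (\<forall>x\<in>X. \<forall>y\<in>X. \<forall>z\<in>X.
        (\<alpha> y z // nm y) && \<alpha> x y = \<alpha> y z && (nm y \<setminus>\<setminus> \<alpha> x y)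
      \<and> (\<alpha> y z // nm y) && \<alpha> x y \<le> \<alpha> x z)"

end

end

theory Submission
  imports Defs
begin

context unital_quantale
begin

lemma mono_l: "a \<le> b \<Longrightarrow> a && c \<le> b && c"
proof -
  assume "a \<le> b"
  hence "Sup {a, b} = b" by (simp add: sup.absorb2)
  hence "b && c = Sup ((\<lambda>x. x && c) ` {a,b})" using Sup_distrib_right[of "{a,b}" c] by simp
  thus ?thesis by (metis sup.cobounded1 image_insert image_empty Sup_insert Sup_empty sup_bot.right_neutral)
qed

lemma mono_r: "a \<le> b \<Longrightarrow> c && a \<le> c && b"
proof -
  assume "a \<le> b"
  hence "Sup {a, b} = b" by (simp add: sup.absorb2)
  hence "c && b = Sup ((\<lambda>x. c && x) ` {a,b})" using Sup_distrib_left[of c "{a,b}"] by simp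
  thus ?thesis by (metis sup.cobounded1 image_insert image_empty Sup_insert Sup_empty sup_bot.right_neutral)
qed

lemma radj: "p && q \<le> r \<longleftrightarrow> p \<le> r // q"
proof
  assume "p && q \<le> r" thus "p \<le> r // q" unfolding rimp_def by (auto intro: Sup_upper)
next
  assume h: "p \<le> r // q"
  have "(r // q) && q = Sup ((\<lambda>a. a && q) ` {p. p && q \<le> r})"
    unfolding rimp_def by (rule Sup_distrib_right)
  also have "\<dots> \<le> r" by (auto intro: Sup_least)
  finally show "p && q \<le> r" using mono_l[OF h, of q] by simp
qed

lemma ladj: "p && q \<le> r \<longleftrightarrow> q \<le> p \<setminus>\<setminus> r"
proof
  assume "p && q \<le> r" thus "q \<le> p \<setminus>\<setminus> r" unfolding limp_def by (auto intro: Sup_upper)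
next
  assume h: "q \<le> p \<setminus>\<setminus> r"
  have "p && (p \<setminus>\<setminus> r) = Sup ((\<lambda>a. p && a) ` {q. p && q \<le> r})"
    unfolding limp_def by (rule Sup_distrib_left)
  also have "\<dots> \<le> r" by (auto intro: Sup_least)
  finally show "p && q \<le> r" using mono_r[OF h, of p] by simp
qed

lemma rimp_le: "(r // q) && q \<le> r" using radj by blast
lemma limp_le: "p && (p \<setminus>\<setminus> r) \<le> r" using ladj by blast

lemma part1:
  assumes pre: "Q_preorder X nm \<alpha>"
    and h: "\<forall>x\<in>X. nm x \<le> nm' x \<and> nm' x \<le> \<alpha> x x"
  shows "Q_preorder X nm' \<alpha>"
proof -
  have D1: "\<And>x y. x\<in>X \<Longrightarrow> y\<in>X \<Longrightarrow> (\<alpha> x y // nm x) && nm x = \<alpha> x y"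
    and D2: "\<And>x y. x\<in>X \<Longrightarrow> y\<in>X \<Longrightarrow> \<alpha> x y = nm y && (nm y \<setminus>\<setminus> \<alpha> x y)"
    and R: "\<And>x. x\<in>X \<Longrightarrow> nm x \<le> \<alpha> x x"
    and TE: "\<And>x y z. x\<in>X \<Longrightarrow> y\<in>X \<Longrightarrow> z\<in>X \<Longrightarrow>
        (\<alpha> y z // nm y) && \<alpha> x y = \<alpha> y z && (nm y \<setminus>\<setminus> \<alpha> x y)"
    and TL: "\<And>x y z. x\<in>X \<Longrightarrow> y\<in>X \<Longrightarrow> z\<in>X \<Longrightarrow>
        (\<alpha> y z // nm y) && \<alpha> x y \<le> \<alpha> x z"
    using pre unfolding Q_preorder_def by blast+
  have H1: "\<And>x. x\<in>X \<Longrightarrow> nm x \<le> nm' x" and H2: "\<And>x. x\<in>X \<Longrightarrow> nm' x \<le> \<alpha> x x"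
    using h by auto
  have RR: "\<And>x y. x\<in>X \<Longrightarrow> y\<in>X \<Longrightarrow> \<alpha> x y // nm x \<le> \<alpha> x y // nm' x"
  proof -
    fix x y assume x: "x\<in>X" and y: "y\<in>X"
    have "(\<alpha> x y // nm x) && nm' x \<le> (\<alpha> x y // nm x) && \<alpha> x x"
      by (rule mono_r[OF H2[OF x]])
    also have "\<dots> \<le> \<alpha> x y" using TL[OF x x y] .
    finally show "\<alpha> x y // nm x \<le> \<alpha> x y // nm' x" using radj by blast
  qed
  have LL: "\<And>x y. x\<in>X \<Longrightarrow> y\<in>X \<Longrightarrow> nm y \<setminus>\<setminus> \<alpha> x y \<le> nm' y \<setminus>\<setminus> \<alpha> x y"
  proof -
    fix x y assume x: "x\<in>X" and y: "y\<in>X"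
    have "nm' y && (nm y \<setminus>\<setminus> \<alpha> x y) \<le> \<alpha> y y && (nm y \<setminus>\<setminus> \<alpha> x y)"
      by (rule mono_l[OF H2[OF y]])
    also have "\<dots> = (\<alpha> y y // nm y) && \<alpha> x y" using TE[OF x y y] by simp
    also have "\<dots> \<le> \<alpha> x y" using TL[OF x y y] .
    finally show "nm y \<setminus>\<setminus> \<alpha> x y \<le> nm' y \<setminus>\<setminus> \<alpha> x y" using ladj by blast
  qed
  have A1: "\<And>x y. x\<in>X \<Longrightarrow> y\<in>X \<Longrightarrow> (\<alpha> x y // nm' x) && nm x = \<alpha> x y"
  proof -
    fix x y assume x: "x\<in>X" and y: "y\<in>X"
    have "(\<alpha> x y // nm' x) && nm x \<le> (\<alpha> x y // nm' x) && nm' x" by (rule mono_r[OF H1[OF x]])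
    also have "\<dots> \<le> \<alpha> x y" by (rule rimp_le)
    finally have a: "(\<alpha> x y // nm' x) && nm x \<le> \<alpha> x y" .
    have "\<alpha> x y = (\<alpha> x y // nm x) && nm x" using D1[OF x y] by simp
    also have "\<dots> \<le> (\<alpha> x y // nm' x) && nm x" by (rule mono_l[OF RR[OF x y]])
    finally show "(\<alpha> x y // nm' x) && nm x = \<alpha> x y" using a by (rule antisym[rotated])
  qed
  have A1': "\<And>x y. x\<in>X \<Longrightarrow> y\<in>X \<Longrightarrow> (\<alpha> x y // nm' x) && nm' x = \<alpha> x y"
  proof -
    fix x y assume x: "x\<in>X" and y: "y\<in>X"
    have "\<alpha> x y = (\<alpha> x y // nm' x) && nm x" using A1[OF x y] by simp
    also have "\<dots> \<le> (\<alpha> x y // nm' x) && nm' x" by (rule mono_r[OF H1[OF x]])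
    finally show "(\<alpha> x y // nm' x) && nm' x = \<alpha> x y" using rimp_le by (rule antisym[rotated])
  qed
  have B1: "\<And>x y. x\<in>X \<Longrightarrow> y\<in>X \<Longrightarrow> nm y && (nm' y \<setminus>\<setminus> \<alpha> x y) = \<alpha> x y"
  proof -
    fix x y assume x: "x\<in>X" and y: "y\<in>X"
    have "nm y && (nm' y \<setminus>\<setminus> \<alpha> x y) \<le> nm' y && (nm' y \<setminus>\<setminus> \<alpha> x y)" by (rule mono_l[OF H1[OF y]])
    also have "\<dots> \<le> \<alpha> x y" by (rule limp_le)
    finally have a: "nm y && (nm' y \<setminus>\<setminus> \<alpha> x y) \<le> \<alpha> x y" .
    have "\<alpha> x y = nm y && (nm y \<setminus>\<setminus> \<alpha> x y)" using D2[OF x y] .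
    also have "\<dots> \<le> nm y && (nm' y \<setminus>\<setminus> \<alpha> x y)" by (rule mono_r[OF LL[OF x y]])
    finally show "nm y && (nm' y \<setminus>\<setminus> \<alpha> x y) = \<alpha> x y" using a by (rule antisym[rotated])
  qed
  have B1': "\<And>x y. x\<in>X \<Longrightarrow> y\<in>X \<Longrightarrow> \<alpha> x y = nm' y && (nm' y \<setminus>\<setminus> \<alpha> x y)"
  proof -
    fix x y assume x: "x\<in>X" and y: "y\<in>X"
    have "\<alpha> x y = nm y && (nm' y \<setminus>\<setminus> \<alpha> x y)" using B1[OF x y] by simp
    also have "\<dots> \<le> nm' y && (nm' y \<setminus>\<setminus> \<alpha> x y)" by (rule mono_l[OF H1[OF y]])
    finally show "\<alpha> x y = nm' y && (nm' y \<setminus>\<setminus> \<alpha> x y)" using limp_le by (rule antisym)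
  qed
  have T: "\<And>x y z. x\<in>X \<Longrightarrow> y\<in>X \<Longrightarrow> z\<in>X \<Longrightarrow>
        (\<alpha> y z // nm' y) && \<alpha> x y = \<alpha> y z && (nm' y \<setminus>\<setminus> \<alpha> x y)
      \<and> (\<alpha> y z // nm' y) && \<alpha> x y = (\<alpha> y z // nm y) && \<alpha> x y"
  proof -
    fix x y z assume x: "x\<in>X" and y: "y\<in>X" and z: "z\<in>X"
    have e1: "(\<alpha> y z // nm' y) && \<alpha> x y = \<alpha> y z && (nm y \<setminus>\<setminus> \<alpha> x y)"
      using D2[OF x y] A1[OF y z] by (metis mult_assoc)
    have e2: "\<alpha> y z && (nm' y \<setminus>\<setminus> \<alpha> x y) = (\<alpha> y z // nm y) && \<alpha> x y"
      using D1[OF y z] B1[OF x y] by (metis mult_assoc)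
    show "?thesis x y z" using e1 e2 TE[OF x y z] by simp
  qed
  show ?thesis unfolding Q_preorder_def
    using A1' B1' H2 T TL by metis
qed

end

theorem proposition3p3:
  fixes mult :: "'q::complete_lattice \<Rightarrow> 'q \<Rightarrow> 'q" and e :: 'q
    and X :: "'a set" and nm nm' :: "'a \<Rightarrow> 'q" and \<alpha> :: "'a \<Rightarrow> 'a \<Rightarrow> 'q"
  assumes Q: "unital_quantale mult e"
    and nt: "unital_quantale.nontrivial e"
    and pre: "unital_quantale.Q_preorder mult X nm \<alpha>"
  shows "((\<forall>x\<in>X. nm x \<le> nm' x \<and> nm' x \<le> \<alpha> x x)
            \<longrightarrow> unital_quantale.Q_preorder mult X nm' \<alpha>)
       \<and> (unital_quantale.integral e \<longrightarrow> (\<forall>x\<in>X. \<alpha> x x = nm x))"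
proof -
  interpret unital_quantale mult e by (rule Q)
  have p2: "\<alpha> x x = nm x" if int: "integral" and x: "x \<in> X" for x
  proof -
    have "\<alpha> x x = mult (rimp (\<alpha> x x) (nm x)) (nm x)" using pre x unfolding Q_preorder_def by auto
    also have "\<dots> \<le> mult e (nm x)" using int unfolding integral_def by (simp add: mono_l)
    also have "\<dots> = nm x" by (rule unit_left)
    finally show ?thesis using pre x unfolding Q_preorder_def by (auto intro: antisym)
  qed
  show ?thesis using part1[OF pre] p2 by blast
qed

end
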